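(* Let $\mathcal D\subset\mathbb R^d$ be a nonempty compact convex set with Euclidean diameter $M$, and let $f$ be convex and differentiable on an open set containing $\mathcal D$ with $\nabla f$ being $L$-Lipschitz on $\mathcal D$ (Euclidean norm). For $x\in\mathcal D$ let $h(x):=f(x)-\min_{\mathcal D}f$ and $g^{FW}(x):=\max_{s\in\mathcal D}\langle-\nabla f(x),s-x\rangle$. Then for every $x\in\mathcal D$: if $h(x)>LM^2/2$ then $g^{FW}(x)\le h(x)+LM^2/2$, and otherwise $g^{FW}(x)\le M\sqrt{2h(x)L}$. *)

theory Defs
  imports "HOL-Analysis.Analysis"
begin

end

theory Submission imports Defs begin

lemma descent:
  fixes D U :: "'a::euclidean_space set" and f :: "'a \<Rightarrow> real" and grad :: "'a \<Rightarrow> 'a"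
  assumes "convex D" "D \<subseteq> U"
    and der: "\<And>y. y \<in> U \<Longrightarrow> (f has_derivative (\<lambda>v. grad y \<bullet> v)) (at y)"
    and lip: "L-lipschitz_on D grad"
    and x: "x \<in> D" and y: "y \<in> D"
  shows "f y \<le> f x + grad x \<bullet> (y - x) + L / 2 * (norm (y - x))\<^sup>2"
proof -
  define d where "d = y - x"
  define \<psi> where "\<psi> t = f (x + t *\<^sub>R d) - t * (grad x \<bullet> d) - L / 2 * t\<^sup>2 * (norm d)\<^sup>2" for t
  have L0: "0 \<le> L" using lipschitz_on_nonneg[OF lip] .
  have "\<psi> 1 \<le> \<psi> 0"
  proof (rule DERIV_nonpos_imp_nonincreasing[of 0 1])
    fix t :: real assume t: "0 \<le> t" "t \<le> 1"
    have seg: "x + t *\<^sub>R d \<in> D"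
    proof -
      have "x + t *\<^sub>R d = (1 - t) *\<^sub>R x + t *\<^sub>R y" by (simp add: d_def algebra_simps)
      thus ?thesis using convexD_alt[OF assms(1) x y t] by simp
    qed
    have fd: "(f has_derivative (\<lambda>v. grad (x + t *\<^sub>R d) \<bullet> v)) (at (x + t *\<^sub>R d))"
      using der seg assms(2) by blast
    have ld: "((\<lambda>s. x + s *\<^sub>R d) has_derivative (\<lambda>h. h *\<^sub>R d)) (at t)"
      by (auto intro!: derivative_eq_intros)
    have cd: "((\<lambda>s. f (x + s *\<^sub>R d)) has_derivative (\<lambda>h. grad (x + t *\<^sub>R d) \<bullet> (h *\<^sub>R d))) (at t)"
      using has_derivative_compose[OF ld fd] by (simp add: o_def)
    have "((\<lambda>s. f (x + s *\<^sub>R d)) has_real_derivative (grad (x + t *\<^sub>R d) \<bullet> d)) (at t)"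
    proof -
      have e: "(\<lambda>h. grad (x + t *\<^sub>R d) \<bullet> (h *\<^sub>R d)) = (*) (grad (x + t *\<^sub>R d) \<bullet> d)"
        by (rule ext) (simp add: mult.commute)
      show ?thesis using cd unfolding has_field_derivative_def e .
    qed
    hence "(\<psi> has_real_derivative (grad (x + t *\<^sub>R d) \<bullet> d - grad x \<bullet> d - L/2 * (2 * t) * (norm d)\<^sup>2)) (at t)"
      unfolding \<psi>_def
      by (auto intro!: derivative_eq_intros)
    moreover have "grad (x + t *\<^sub>R d) \<bullet> d - grad x \<bullet> d - L/2 * (2 * t) * (norm d)\<^sup>2 \<le> 0"
    proof -
      have "grad (x + t *\<^sub>R d) \<bullet> d - grad x \<bullet> d = (grad (x + t *\<^sub>R d) - grad x) \<bullet> d"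
        by (simp add: inner_diff_left)
      also have "\<dots> \<le> norm (grad (x + t *\<^sub>R d) - grad x) * norm d"
        by (rule Cauchy_Schwarz_ineq2[THEN abs_le_D1])
      also have "norm (grad (x + t *\<^sub>R d) - grad x) \<le> L * norm (t *\<^sub>R d)"
        using lipschitz_onD[OF lip seg x] by (simp add: dist_norm)
      hence "norm (grad (x + t *\<^sub>R d) - grad x) * norm d \<le> L * norm (t *\<^sub>R d) * norm d"
        by (simp add: mult_right_mono)
      also have "\<dots> = L/2 * (2 * t) * (norm d)\<^sup>2" using t by (simp add: power2_eq_square)
      finally show ?thesis by simp
    qed
    ultimately show "\<exists>y. DERIV \<psi> t :> y \<and> y \<le> 0" by blast
  qed simp
  thus ?thesis by (simp add: \<psi>_def d_def)
qed
lemma aux: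
  fixes h L M g :: real
  assumes h0: "h \<ge> 0" and L0: "L \<ge> 0" and M0: "M \<ge> 0"
    and key: "\<And>\<gamma>. 0 \<le> \<gamma> \<Longrightarrow> \<gamma> \<le> 1 \<Longrightarrow> \<gamma> * g \<le> h + L * \<gamma>\<^sup>2 * M\<^sup>2 / 2"
  shows "(h > L * M\<^sup>2 / 2 \<longrightarrow> g \<le> h + L * M\<^sup>2 / 2) \<and>
         (\<not> h > L * M\<^sup>2 / 2 \<longrightarrow> g \<le> M * sqrt (2 * h * L))"
proof (intro conjI impI)
  show "g \<le> h + L * M\<^sup>2 / 2" using key[of 1] by simp
next
  assume nh: "\<not> h > L * M\<^sup>2 / 2"
  define K where "K = L * M\<^sup>2"
  have K0: "K \<ge> 0" using L0 by (simp add: K_def)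
  show "g \<le> M * sqrt (2 * h * L)"
  proof (cases "h = 0")
    case True
    have "g \<le> 0"
    proof (rule ccontr)
      assume gp: "\<not> g \<le> 0"
      show False
      proof (cases "K = 0")
        case True then show False using key[of 1] gp \<open>h = 0\<close> unfolding K_def by auto
      next
        case False
        hence Kp: "K > 0" using K0 by simp
        define \<gamma> where "\<gamma> = min 1 (g / K)"
        have gp': "\<gamma> > 0" using gp Kp by (simp add: \<gamma>_def)
        have "\<gamma> * g \<le> \<gamma> * (\<gamma> * K / 2)" using key[of \<gamma>] gp' \<open>h = 0\<close>
          by (simp add: \<gamma>_def K_def power2_eq_square algebra_simps)
        hence "g \<le> \<gamma> * K / 2" using gp' by simp
        also have "\<dots> \<le> g / K * K / 2" using Kp
          by (intro divide_right_mono mult_right_mono) (auto simp: \<gamma>_def)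
        also have "\<dots> = g / 2" using Kp by simp
        finally show False using gp by simp
      qed
    qed
    thus ?thesis using True by simp
  next
    case False
    hence hp: "h > 0" using h0 by simp
    hence Kp: "K > 0" "K \<ge> 2 * h" using nh by (auto simp: K_def)
    have Lp: "L > 0" and Mp: "M > 0" using Kp(1) L0 M0 by (auto simp: K_def zero_less_mult_iff)
    define \<gamma> where "\<gamma> = sqrt (2 * h / K)"
    have g0: "\<gamma> > 0" using hp Kp by (simp add: \<gamma>_def)
    have g1: "\<gamma> \<le> 1" using Kp by (simp add: \<gamma>_def)
    have gsq: "\<gamma>\<^sup>2 = 2 * h / K" using hp Kp by (simp add: \<gamma>_def)
    have "\<gamma> * g \<le> h + \<gamma>\<^sup>2 * K / 2" using key[OF less_imp_le[OF g0] g1]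
      by (simp add: K_def algebra_simps)
    also have "\<dots> = 2 * h" using gsq Kp by simp
    finally have A: "\<gamma> * g \<le> 2 * h" .
    have B: "M * sqrt (2 * h * L) * \<gamma> = 2 * h"
    proof -
      have "M * sqrt (2 * h * L) * \<gamma> = M * sqrt (2 * h * L * (2 * h / K))"
        by (simp only: \<gamma>_def real_sqrt_mult mult.assoc)
      also have "2 * h * L * (2 * h / K) = (2 * h / M)\<^sup>2"
        using Mp Lp by (simp add: K_def power2_eq_square field_simps)
      also have "M * sqrt ((2 * h / M)\<^sup>2) = 2 * h" using Mp hp by simp
      finally show ?thesis .
    qed
    have "\<gamma> * g \<le> \<gamma> * (M * sqrt (2 * h * L))" using A B by (simp add: mult.commute)
    thus ?thesis using g0 by simp
  qed
qed
theorem theorem2: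
  fixes D U :: "'a::euclidean_space set" and f :: "'a \<Rightarrow> real" and grad :: "'a \<Rightarrow> 'a"
    and L M :: real and x :: 'a
  assumes "D \<noteq> {}" and "compact D" and "convex D"
    and "M = diameter D"
    and "open U" and "D \<subseteq> U"
    and "convex_on U f"
    and "\<And>y. y \<in> U \<Longrightarrow> (f has_derivative (\<lambda>v. grad y \<bullet> v)) (at y)"
    and "L-lipschitz_on D grad"
    and "x \<in> D"
  shows "let h = f x - Inf (f ` D);
             gFW = Sup ((\<lambda>s. (- grad x) \<bullet> (s - x)) ` D)
         in (h > L * M\<^sup>2 / 2 \<longrightarrow> gFW \<le> h + L * M\<^sup>2 / 2) \<and>
            (\<not> h > L * M\<^sup>2 / 2 \<longrightarrow> gFW \<le> M * sqrt (2 * h * L))"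
proof -
  define h where "h = f x - Inf (f ` D)"
  have cont: "continuous_on D f"
    using assms(6,8) by (intro continuous_at_imp_continuous_on) (auto intro: has_derivative_continuous)
  have bdd: "bdd_below (f ` D)"
    by (intro bounded_imp_bdd_below compact_imp_bounded compact_continuous_image cont assms(2))
  have infle: "Inf (f ` D) \<le> f y" if "y \<in> D" for y
    using bdd that by (simp add: cInf_lower)
  have h0: "h \<ge> 0" using infle[OF assms(10)] by (simp add: h_def)
  have L0: "L \<ge> 0" using lipschitz_on_nonneg[OF assms(9)] .
  have bD: "bounded D" using assms(2) compact_imp_bounded by blast
  have M0: "M \<ge> 0" using assms(4) diameter_ge_0[OF bD] by simp
  have conc: "(h > L * M\<^sup>2 / 2 \<longrightarrow> g \<le> h + L * M\<^sup>2 / 2) \<and>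
         (\<not> h > L * M\<^sup>2 / 2 \<longrightarrow> g \<le> M * sqrt (2 * h * L))"
    if s: "s \<in> D" and gdef: "g = (- grad x) \<bullet> (s - x)" for s g
  proof (rule aux[OF h0 L0 M0])
    fix \<gamma> :: real assume g: "0 \<le> \<gamma>" "\<gamma> \<le> 1"
    define y where "y = x + \<gamma> *\<^sub>R (s - x)"
    have yD: "y \<in> D"
    proof -
      have "y = (1 - \<gamma>) *\<^sub>R x + \<gamma> *\<^sub>R s" by (simp add: y_def algebra_simps)
      thus ?thesis using convexD_alt[OF assms(3) assms(10) s g] by simp
    qed
    have "Inf (f ` D) \<le> f y" by (rule infle[OF yD])
    also have "\<dots> \<le> f x + grad x \<bullet> (y - x) + L / 2 * (norm (y - x))\<^sup>2"
      by (rule descent[OF assms(3,6,8,9,10) yD])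
    also have "grad x \<bullet> (y - x) = - (\<gamma> * g)" by (simp add: y_def gdef)
    also have "(norm (y - x))\<^sup>2 = \<gamma>\<^sup>2 * (norm (s - x))\<^sup>2"
      using g by (simp add: y_def power_mult_distrib)
    also have "norm (s - x) \<le> M"
      using diameter_bounded_bound[OF bD s assms(10)] assms(4) by (simp add: dist_norm norm_minus_commute)
    hence "L / 2 * (\<gamma>\<^sup>2 * (norm (s - x))\<^sup>2) \<le> L / 2 * (\<gamma>\<^sup>2 * M\<^sup>2)"
      using L0 by (intro mult_left_mono power_mono) auto
    finally show "\<gamma> * g \<le> h + L * \<gamma>\<^sup>2 * M\<^sup>2 / 2" by (simp add: h_def algebra_simps)
  qed
  have ub: "(\<lambda>s. (- grad x) \<bullet> (s - x)) s \<le> (if h > L * M\<^sup>2 / 2 then h + L * M\<^sup>2 / 2 else M * sqrt (2 * h * L))"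
    if "s \<in> D" for s using conc[OF that refl] by auto
  have "Sup ((\<lambda>s. (- grad x) \<bullet> (s - x)) ` D) \<le> (if h > L * M\<^sup>2 / 2 then h + L * M\<^sup>2 / 2 else M * sqrt (2 * h * L))"
    using assms(1) ub by (intro cSup_least) auto
  thus ?thesis unfolding Let_def h_def[symmetric] by auto
qed

end
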